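(* Let $1\le p,q<\infty$, let $\nu$ be a modulus of variation, $\phi$ an Orlicz function, and $\Lambda=\{\lambda_j\}$ a $\Lambda$-sequence. Then (all classes of functions on $[0,1]$, inclusion meaning every function of the first class belongs to the second): (i) $BV_q\subseteq V_p[\nu]$ iff $\limsup_{n\to\infty}\frac1{\nu(n)}\max_{1\le k\le n}k^{1/p-1/q}<\infty$; (ii) $V_\phi\subseteq V_p[\nu]$ iff $\limsup_{n\to\infty}\frac1{\nu(n)}\max_{1\le k\le n}k^{1/p}\phi^{-1}(1/k)<\infty$; (iii) $\Lambda\mathrm{BV}\subseteq V_p[\nu]$ iff $\limsup_{n\to\infty}\frac1{\nu(n)}\max_{1\le k\le n}\frac{k^{1/p}}{\sum_{j=1}^k1/\lambda_j}<\infty$; (iv) $\Lambda\mathrm{BV}^{(q)}\subseteq V_p[\nu]$ iff $\limsup_{n\to\infty}\frac1{\nu(n)}\max_{1\le k\le n}k^{1/p}\big(\sum_{j=1}^k1/\lambda_j\big)^{-1/q}<\infty$; (v) $\phi\Lambda\mathrm{BV}\subseteq V_p[\nu]$ iff $\limsup_{n\to\infty}\frac1{\nu(n)}\max_{1\le k\le n}k^{1/p}\phi^{-1}\Big(\big(\sum_{j=1}^k1/\lambda_j\big)^{-1}\Big)<\infty$.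
   Context: A modulus of variation is a nondecreasing concave sequence of positive numbers. An Orlicz function is a continuous convex $\phi$ on $[0,\infty)$ with $\phi(x)>0$ for $x>0$, $\phi(x)/x\to0$ as $x\to0^+$ and $\phi(x)/x\to\infty$ as $x\to\infty$. A $\Lambda$-sequence is a nondecreasing sequence of positive numbers with $\sum_j1/\lambda_j=\infty$. For $f$ on $[0,1]$ and nonoverlapping subintervals $I_j$, $f(I)=f(\sup I)-f(\inf I)$. Given a sequence $\{\phi_j\}$ of increasing convex functions with $\phi_j(0)=0$, a function $f$ belongs to the class defined by $\{\phi_j\}$ if $\sup\sum_j\phi_j(|cf(I_j)|)<\infty$ for some $c>0$, the sup over all finite collections of nonoverlapping subintervals of $[0,1]$. $V_\phi$ is this class with $\phi_j=\phi$; $BV_q$ with $\phi_j(x)=x^q$; $\phi\Lambda\mathrm{BV}$ with $\phi_j=\phi/\lambda_j$; $\Lambda\mathrm{BV}^{(q)}$ with $\phi_j(x)=x^q/\lambda_j$; $\Lambda\mathrm{BV}=\Lambda\mathrm{BV}^{(1)}$. $\upsilon_p(n,f)=\sup(\sum_{j=1}^n|f(I_j)|^p)^{1/p}$ over $n$ nonoverlapping subintervals, and $V_p[\nu]$ is the set of bounded $f$ with $\sup_n\upsilon_p(n,f)/\nu(n)<\infty$. *)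

theory Defs
  imports "HOL-Analysis.Analysis"
begin

text \<open>All sequences are indexed from 1 (values at index 0 are irrelevant).\<close>

definition modulus_of_variation :: "(nat \<Rightarrow> real) \<Rightarrow> bool" where
  "modulus_of_variation \<nu> \<longleftrightarrow>
     (\<forall>n\<ge>1. 0 < \<nu> n) \<and> (\<forall>n\<ge>1. \<nu> n \<le> \<nu> (Suc n)) \<and>
     (\<forall>n\<ge>1. \<nu> (Suc (Suc n)) - \<nu> (Suc n) \<le> \<nu> (Suc n) - \<nu> n)"

definition orlicz_function :: "(real \<Rightarrow> real) \<Rightarrow> bool" where
  "orlicz_function \<phi> \<longleftrightarrow>
     continuous_on {0..} \<phi> \<and> convex_on {0..} \<phi> \<and> (\<forall>x>0. \<phi> x > 0) \<and>
     ((\<lambda>x. \<phi> x / x) \<longlongrightarrow> 0) (at_right 0) \<and>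
     filterlim (\<lambda>x. \<phi> x / x) at_top at_top"

definition Lambda_sequence :: "(nat \<Rightarrow> real) \<Rightarrow> bool" where
  "Lambda_sequence \<Lambda> \<longleftrightarrow>
     (\<forall>j\<ge>1. 0 < \<Lambda> j) \<and> (\<forall>j\<ge>1. \<Lambda> j \<le> \<Lambda> (Suc j)) \<and>
     \<not> summable (\<lambda>j. 1 / \<Lambda> (Suc j))"

definition orlicz_inv :: "(real \<Rightarrow> real) \<Rightarrow> real \<Rightarrow> real" where
  "orlicz_inv \<phi> y = (THE x. 0 \<le> x \<and> \<phi> x = y)"

definition nonoverlapping :: "nat \<Rightarrow> (nat \<Rightarrow> real) \<Rightarrow> (nat \<Rightarrow> real) \<Rightarrow> bool" where
  "nonoverlapping n a b \<longleftrightarrow>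
     (\<forall>j\<in>{1..n}. 0 \<le> a j \<and> a j \<le> b j \<and> b j \<le> 1) \<and>
     (\<forall>i\<in>{1..n}. \<forall>j\<in>{1..n}. i \<noteq> j \<longrightarrow> b i \<le> a j \<or> b j \<le> a i)"

definition phi_class :: "(nat \<Rightarrow> real \<Rightarrow> real) \<Rightarrow> (real \<Rightarrow> real) set" where
  "phi_class \<Phi> = {f. \<exists>c>0. \<exists>M. \<forall>n a b. nonoverlapping n a b \<longrightarrow>
       (\<Sum>j=1..n. \<Phi> j \<bar>c * (f (b j) - f (a j))\<bar>) \<le> M}"

definition BV_q :: "real \<Rightarrow> (real \<Rightarrow> real) set" where
  "BV_q q = phi_class (\<lambda>j x. x powr q)"

definition V_phi :: "(real \<Rightarrow> real) \<Rightarrow> (real \<Rightarrow> real) set" where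
  "V_phi \<phi> = phi_class (\<lambda>j. \<phi>)"

definition phiLambdaBV :: "(real \<Rightarrow> real) \<Rightarrow> (nat \<Rightarrow> real) \<Rightarrow> (real \<Rightarrow> real) set" where
  "phiLambdaBV \<phi> \<Lambda> = phi_class (\<lambda>j x. \<phi> x / \<Lambda> j)"

definition LambdaBV_q :: "(nat \<Rightarrow> real) \<Rightarrow> real \<Rightarrow> (real \<Rightarrow> real) set" where
  "LambdaBV_q \<Lambda> q = phi_class (\<lambda>j x. x powr q / \<Lambda> j)"

definition LambdaBV :: "(nat \<Rightarrow> real) \<Rightarrow> (real \<Rightarrow> real) set" where
  "LambdaBV \<Lambda> = LambdaBV_q \<Lambda> 1"

definition Vp_nu :: "real \<Rightarrow> (nat \<Rightarrow> real) \<Rightarrow> (real \<Rightarrow> real) set" where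
  "Vp_nu p \<nu> = {f. (\<exists>B. \<forall>x\<in>{0..1}. \<bar>f x\<bar> \<le> B) \<and>
      (\<exists>M. \<forall>n\<ge>1. \<forall>a b. nonoverlapping n a b \<longrightarrow>
          (\<Sum>j=1..n. \<bar>f (b j) - f (a j)\<bar> powr p) powr (1 / p) \<le> M * \<nu> n)}"

end

theory Submission
  imports Defs
begin


lemma mono_from1:
  fixes g :: "nat \<Rightarrow> real"
  assumes "\<forall>n\<ge>1. g n \<le> g (Suc n)" "1 \<le> i" "i \<le> j"
  shows "g i \<le> g j"
  using assms(3)
proof (induction j rule: dec_induct)
  case base then show ?case by simp
next
  case (step k) then show ?case using assms(1,2) by (meson order_trans)
qed

locale psi_fun =
  fixes \<psi> :: "real \<Rightarrow> real"
  assumes psi0: "\<psi> 0 = 0"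
    and cvx: "convex_on {0..} \<psi>"
    and pos: "\<And>x. x > 0 \<Longrightarrow> \<psi> x > 0"
    and surj: "\<And>y. y \<ge> 0 \<Longrightarrow> \<exists>x\<ge>0. \<psi> x = y"
begin

lemma scale_le: assumes "0 \<le> t" "t \<le> 1" "0 \<le> x" shows "\<psi> (t * x) \<le> t * \<psi> x"
proof -
  have "\<psi> ((1 - t) *\<^sub>R 0 + t *\<^sub>R x) \<le> (1 - t) * \<psi> 0 + t * \<psi> x"
    using convex_onD[OF cvx, of t 0 x] assms by auto
  then show ?thesis using psi0 by simp
qed

lemma nonneg: assumes "0 \<le> x" shows "0 \<le> \<psi> x"
  using assms pos psi0 by (cases "x = 0") (auto simp: less_imp_le)

lemma strict_mono: assumes "0 \<le> x" "x < y" shows "\<psi> x < \<psi> y"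
proof -
  have y: "y > 0" using assms by simp
  have "\<psi> ((x / y) * y) \<le> (x / y) * \<psi> y"
    using scale_le[of "x/y" y] assms y by auto
  moreover have "x / y < 1" using assms y by simp
  then have "(x / y) * \<psi> y < 1 * \<psi> y"
    using mult_strict_right_mono[OF _ pos[OF y]] by blast
  ultimately show ?thesis using y by simp
qed

lemma mono: assumes "0 \<le> x" "x \<le> y" shows "\<psi> x \<le> \<psi> y"
  using strict_mono[of x y] assms by (cases "x = y") auto

lemma le_iff: assumes "0 \<le> x" "0 \<le> y" shows "\<psi> x \<le> \<psi> y \<longleftrightarrow> x \<le> y"
  using strict_mono[of y x] mono[of x y] assms by (meson not_le)

lemma double: assumes "0 \<le> x" shows "2 * \<psi> x \<le> \<psi> (2 * x)"
  using scale_le[of "1/2" "2*x"] assms by simp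

lemma midpoint: assumes "0 \<le> x" "0 \<le> y" shows "\<psi> ((x + y) / 2) \<le> (\<psi> x + \<psi> y) / 2"
proof -
  have "\<psi> ((1 - 1/2) *\<^sub>R x + (1/2) *\<^sub>R y) \<le> (1 - 1/2) * \<psi> x + (1/2) * \<psi> y"
    using convex_onD[OF cvx, of "1/2" x y] assms by auto
  then show ?thesis by (simp add: field_simps)
qed

lemma inv: assumes "0 \<le> y" shows "0 \<le> orlicz_inv \<psi> y" "\<psi> (orlicz_inv \<psi> y) = y"
proof -
  obtain x where x: "x \<ge> 0" "\<psi> x = y" using surj assms by blast
  have u: "z = x" if "0 \<le> z \<and> \<psi> z = y" for z
  proof -
    have "z \<le> x" using le_iff[of z x] x that by simp
    moreover have "x \<le> z" using le_iff[of x z] x that by simp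
    ultimately show ?thesis by simp
  qed
  have "orlicz_inv \<psi> y = x" unfolding orlicz_inv_def
  proof (rule the_equality)
    show "0 \<le> x \<and> \<psi> x = y" using x by simp
  next
    fix z assume "0 \<le> z \<and> \<psi> z = y" then show "z = x" by (rule u)
  qed
  then show "0 \<le> orlicz_inv \<psi> y" "\<psi> (orlicz_inv \<psi> y) = y" using x by auto
qed

lemma le_inv: assumes "0 \<le> x" "\<psi> x \<le> y" shows "x \<le> orlicz_inv \<psi> y"
proof -
  have "0 \<le> y" using nonneg[OF assms(1)] assms by simp
  then show ?thesis using inv[of y] le_iff[of x "orlicz_inv \<psi> y"] assms by simp
qed

lemma div_le: assumes "1 \<le> M" "0 \<le> x" shows "\<psi> (x / M) \<le> \<psi> x / M"
  using scale_le[of "1/M" x] assms by (simp add: field_simps)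

end



locale cfg = psi_fun +
  fixes \<Lambda> :: "nat \<Rightarrow> real"
  assumes Lpos: "\<And>j. j \<ge> 1 \<Longrightarrow> 0 < \<Lambda> j"
    and Lmono: "\<forall>j\<ge>1. \<Lambda> j \<le> \<Lambda> (Suc j)"
begin

definition L :: "nat \<Rightarrow> real" where "L k = (\<Sum>j=1..k. 1 / \<Lambda> j)"
definition A :: "nat \<Rightarrow> real" where "A k = orlicz_inv \<psi> (1 / L k)"

lemma Lmono': "1 \<le> i \<Longrightarrow> i \<le> j \<Longrightarrow> \<Lambda> i \<le> \<Lambda> j"
  using mono_from1[OF Lmono] by blast

lemma mu_anti: "1 \<le> i \<Longrightarrow> i \<le> j \<Longrightarrow> 1 / \<Lambda> j \<le> 1 / \<Lambda> i"
  using Lmono'[of i j] Lpos[of i] by (simp add: frac_le)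

lemma L_nonneg: "0 \<le> L k"
  unfolding L_def by (intro sum_nonneg) (use Lpos in \<open>auto simp: less_imp_le\<close>)

lemma L_pos: "1 \<le> k \<Longrightarrow> 0 < L k"
  unfolding L_def by (intro sum_pos) (use Lpos in auto)

lemma L_Suc: "L (Suc k) = L k + 1 / \<Lambda> (Suc k)"
  unfolding L_def by simp

lemma L_mono: "i \<le> j \<Longrightarrow> L i \<le> L j"
proof (induction j rule: dec_induct)
  case base then show ?case by simp
next
  case (step k)
  have "0 < 1 / \<Lambda> (Suc k)" using Lpos[of "Suc k"] by simp
  then show ?case using step L_Suc[of k] by linarith
qed

lemma a_nonneg: "0 \<le> A k" unfolding A_def using inv L_nonneg by simp

lemma psi_a: "1 \<le> k \<Longrightarrow> \<psi> (A k) = 1 / L k"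
  unfolding A_def using inv L_nonneg by simp

lemma L_diff: "m \<le> k \<Longrightarrow> 1 \<le> m \<Longrightarrow> L k - L m \<le> real (k - m) / \<Lambda> m"
proof (induction k rule: dec_induct)
  case base then show ?case by simp
next
  case (step k)
  have "1 / \<Lambda> (Suc k) \<le> 1 / \<Lambda> m" using mu_anti[of m "Suc k"] step by simp
  then show ?case using step L_Suc[of k] by (simp add: Suc_diff_le add_divide_distrib)
qed

lemma sum_card: "finite S \<Longrightarrow> S \<subseteq> {1..} \<Longrightarrow> (\<Sum>j\<in>S. 1 / \<Lambda> j) \<le> L (card S)"
proof (induction "card S" arbitrary: S)
  case 0 then show ?case by (simp add: L_def)
next
  case (Suc s)
  then have ne: "S \<noteq> {}" by auto
  define m where "m = Max S"
  have mS: "m \<in> S" using Max_in Suc ne m_def by auto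
  have "S \<subseteq> {1..m}" using Suc m_def by auto
  then have "card S \<le> m" using card_mono[of "{1..m}" S] by simp
  then have "Suc s \<le> m" using Suc by simp
  then have le: "1 / \<Lambda> m \<le> 1 / \<Lambda> (Suc s)" using mu_anti[of "Suc s" m] by simp
  have "(\<Sum>j\<in>S. 1 / \<Lambda> j) = 1 / \<Lambda> m + (\<Sum>j\<in>S - {m}. 1 / \<Lambda> j)"
    using Suc mS by (simp add: sum.remove)
  also have "(\<Sum>j\<in>S - {m}. 1 / \<Lambda> j) \<le> L s"
  proof -
    have c: "s = card (S - {m})" using Suc mS by simp
    show ?thesis using Suc(1)[OF c] Suc mS c by auto
  qed
  finally show ?case using le L_Suc[of s] Suc by simp
qed

lemma sum_card_le: "finite S \<Longrightarrow> S \<subseteq> {1..} \<Longrightarrow> card S \<le> k \<Longrightarrow> (\<Sum>j\<in>S. 1 / \<Lambda> j) \<le> L k"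
  by (rule order_trans[OF sum_card L_mono])

end


context cfg begin

lemma per_m:
  assumes p: "0 < p" and y: "\<forall>j\<in>{1..n}. 0 \<le> y j"
    and ymono: "\<forall>i\<in>{1..n}. \<forall>j\<in>{1..n}. i \<le> j \<longrightarrow> y j \<le> y i"
    and cons: "(\<Sum>j=1..n. \<psi> (y j) / \<Lambda> j) \<le> 1"
    and G: "\<forall>k\<in>{1..n}. real k * A k powr p \<le> G" and G0: "0 \<le> G"
    and m: "m \<in> {1..n}"
  shows "y m powr p \<le> 2 powr p * G * (2 * (\<psi> (y m) / \<Lambda> m) + 1 / real n)"
proof (cases "y m = 0")
  case True
  have "0 \<le> 2 powr p * G * (2 * (\<psi> (y m) / \<Lambda> m) + 1 / real n)"
    using G0 nonneg[of "y m"] Lpos[of m] m y by (intro mult_nonneg_nonneg add_nonneg_nonneg) auto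
  then show ?thesis using True by simp
next
  case False
  define Y where "Y = \<psi> (y m)"
  have ym: "y m > 0" using False y m by force
  have Y: "Y > 0" unfolding Y_def using pos[OF ym] .
  have m1: "1 \<le> m" "m \<le> n" using m by auto
  have "Y * L m = (\<Sum>j=1..m. Y / \<Lambda> j)" unfolding L_def by (simp add: sum_distrib_left)
  also have "\<dots> \<le> (\<Sum>j=1..m. \<psi> (y j) / \<Lambda> j)"
  proof (rule sum_mono)
    fix j assume j: "j \<in> {1..m}"
    have "y m \<le> y j" using ymono m j by auto
    then have "Y \<le> \<psi> (y j)" unfolding Y_def using mono[of "y m" "y j"] ym by simp
    then show "Y / \<Lambda> j \<le> \<psi> (y j) / \<Lambda> j" using Lpos[of j] j by (simp add: divide_right_mono)
  qed
  also have "\<dots> \<le> (\<Sum>j=1..n. \<psi> (y j) / \<Lambda> j)"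
    by (rule sum_mono2) (use m1 y nonneg Lpos in \<open>auto intro!: divide_nonneg_pos\<close>)
  finally have YL: "Y * L m \<le> 1" using cons by simp
  have Lm: "L m \<le> 1 / Y" using YL Y by (simp add: field_simps)
  define S where "S = {k\<in>{1..n}. L k \<le> 2 / Y}"
  have mS: "m \<in> S" unfolding S_def using m Lm Y by (auto simp: field_simps)
  have finS: "finite S" unfolding S_def by simp
  define K where "K = Max S"
  have KS: "K \<in> S" unfolding K_def using finS mS Max_in by auto
  have mK: "m \<le> K" unfolding K_def using finS mS by simp
  have K1: "1 \<le> K" "K \<le> n" using KS S_def by auto
  have LK: "L K \<le> 2 / Y" using KS S_def by auto
  have LKpos: "L K > 0" using L_pos K1 by simp
  have "Y \<le> 2 / L K" using LK Y LKpos by (simp add: field_simps)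
  also have "\<dots> = 2 * \<psi> (A K)" using psi_a K1 by simp
  also have "\<dots> \<le> \<psi> (2 * A K)" using double a_nonneg by simp
  finally have "y m \<le> 2 * A K" using le_iff[of "y m" "2 * A K"] ym a_nonneg Y_def by simp
  then have "y m powr p \<le> (2 * A K) powr p" using ym by (intro powr_mono2) (use p in auto)
  also have "\<dots> = 2 powr p * A K powr p" using a_nonneg by (simp add: powr_mult)
  finally have st1: "y m powr p \<le> 2 powr p * A K powr p" .
  have aK: "A K powr p \<le> G / real K" using G K1 by (auto simp: field_simps mult.commute)
  have two: "0 \<le> 2 powr p" by simp
  show ?thesis
  proof (cases "K = n")
    case True
    have "y m powr p \<le> 2 powr p * (G / real n)" using st1 aK True two
      by (meson mult_left_mono order_trans)
    also have "\<dots> \<le> 2 powr p * G * (2 * (\<psi> (y m) / \<Lambda> m) + 1 / real n)"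
    proof -
      have "0 \<le> 2 * (\<psi> (y m) / \<Lambda> m)" using Y Y_def Lpos[of m] m1 by simp
      then have "G * (1 / real n) \<le> G * (2 * (\<psi> (y m) / \<Lambda> m) + 1 / real n)"
        using G0 by (intro mult_left_mono) auto
      then have "2 powr p * (G * (1 / real n)) \<le> 2 powr p * (G * (2 * (\<psi> (y m) / \<Lambda> m) + 1 / real n))"
        by (rule mult_left_mono[OF _ two])
      then show ?thesis by (simp add: mult.assoc)
    qed
    finally show ?thesis .
  next
    case False
    then have SK: "Suc K \<in> {1..n}" using K1 by auto
    have "Suc K \<notin> S" using finS K_def by (metis Max_ge Suc_n_not_le_n)
    then have gt: "L (Suc K) > 2 / Y" using SK S_def by auto
    have "L (Suc K) - L m \<le> real (Suc K - m) / \<Lambda> m" using L_diff[of m "Suc K"] mK m1 by simp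
    also have "\<dots> \<le> real (Suc K) / \<Lambda> m" using Lpos[of m] m1 by (simp add: divide_right_mono)
    finally have "2 / Y - 1 / Y < real (Suc K) / \<Lambda> m" using gt Lm by linarith
    then have "1 / Y < real (Suc K) / \<Lambda> m" by (simp add: diff_divide_distrib)
    then have "\<Lambda> m < Y * real (Suc K)" using Y Lpos[of m] m1 by (simp add: field_simps)
    also have "\<dots> \<le> Y * (2 * real K)" using K1 Y by simp
    finally have lam: "\<Lambda> m \<le> 2 * Y * real K" by simp
    have "G / real K \<le> G * (2 * (Y / \<Lambda> m))"
    proof -
      have "1 / real K \<le> 2 * (Y / \<Lambda> m)" using lam K1 Lpos[of m] m1 Y by (simp add: field_simps)
      then show ?thesis using G0 mult_left_mono by fastforce
    qed
    also have "\<dots> \<le> G * (2 * (Y / \<Lambda> m) + 1 / real n)"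
      by (rule mult_left_mono) (use G0 in auto)
    finally have "A K powr p \<le> G * (2 * (Y / \<Lambda> m) + 1 / real n)" using aK by simp
    then have fin: "2 powr p * A K powr p \<le> 2 powr p * (G * (2 * (Y / \<Lambda> m) + 1 / real n))"
      by (rule mult_left_mono[OF _ two])
    show ?thesis using order_trans[OF st1 fin] Y_def by (simp add: mult.assoc)
  qed
qed

lemma seq_bound:
  assumes p: "0 < p" and y: "\<forall>j\<in>{1..n}. 0 \<le> y j"
    and ymono: "\<forall>i\<in>{1..n}. \<forall>j\<in>{1..n}. i \<le> j \<longrightarrow> y j \<le> y i"
    and cons: "(\<Sum>j=1..n. \<psi> (y j) / \<Lambda> j) \<le> 1"
    and G: "\<forall>k\<in>{1..n}. real k * A k powr p \<le> G" and G0: "0 \<le> G"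
  shows "(\<Sum>j=1..n. y j powr p) \<le> 2 powr p * G * 3"
proof -
  define t where "t j = \<psi> (y j) / \<Lambda> j" for j
  define C where "C = 2 powr p * G"
  have C0: "0 \<le> C" using G0 C_def by simp
  have "(\<Sum>j=1..n. y j powr p) \<le> (\<Sum>j=1..n. C * (2 * t j + 1 / real n))"
    unfolding C_def t_def by (rule sum_mono) (rule per_m[OF assms])
  also have "\<dots> = C * (\<Sum>j=1..n. (2 * t j + 1 / real n))"
    by (rule sum_distrib_left[symmetric])
  also have "(\<Sum>j=1..n. (2 * t j + 1 / real n)) = 2 * (\<Sum>j=1..n. t j) + real n * (1 / real n)"
    by (simp add: sum.distrib sum_distrib_left)
  also have "C * (2 * (\<Sum>j=1..n. t j) + real n * (1 / real n)) \<le> C * 3"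
  proof -
    have "real n * (1 / real n) \<le> 1" by (cases "n = 0") auto
    then have "2 * (\<Sum>j=1..n. t j) + real n * (1 / real n) \<le> 3" using cons t_def by simp
    then show ?thesis using C0 by (intro mult_left_mono) auto
  qed
  finally show ?thesis unfolding C_def by simp
qed

end


lemma sort_perm:
  fixes d :: "nat \<Rightarrow> real"
  shows "\<exists>\<sigma>. bij_betw \<sigma> {1..n} {1..n} \<and> (\<forall>i\<in>{1..n}. \<forall>j\<in>{1..n}. i \<le> j \<longrightarrow> d (\<sigma> j) \<le> d (\<sigma> i))"
proof -
  define xs where "xs = sort_key (\<lambda>i. - d i) [1..<Suc n]"
  have len: "length xs = n" unfolding xs_def by simp
  have dist: "distinct xs" unfolding xs_def by simp
  have set: "set xs = {1..n}" unfolding xs_def by auto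
  have srt: "sorted (map (\<lambda>i. - d i) xs)" unfolding xs_def by simp
  define \<sigma> where "\<sigma> i = xs ! (i - 1)" for i
  have inj: "inj_on \<sigma> {1..n}"
  proof
    fix i j assume i: "i \<in> {1..n}" and j: "j \<in> {1..n}" and e: "\<sigma> i = \<sigma> j"
    then have "i - 1 = j - 1" using nth_eq_iff_index_eq[OF dist, of "i - 1" "j - 1"] len \<sigma>_def by auto
    then show "i = j" using i j by auto
  qed
  have img: "\<sigma> ` {1..n} = {1..n}"
  proof
    show "\<sigma> ` {1..n} \<subseteq> {1..n}"
    proof
      fix x assume "x \<in> \<sigma> ` {1..n}"
      then obtain i where i: "i \<in> {1..n}" "x = xs ! (i - 1)" using \<sigma>_def by auto
      then have "x \<in> set xs" using len by auto
      then show "x \<in> {1..n}" using set by simp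
    qed
  next
    show "{1..n} \<subseteq> \<sigma> ` {1..n}"
    proof
      fix x assume "x \<in> {1..n}"
      then have "x \<in> set xs" using set by simp
      then obtain k where k: "k < n" "xs ! k = x" using len in_set_conv_nth by metis
      then have "\<sigma> (Suc k) = x" "Suc k \<in> {1..n}" using \<sigma>_def by auto
      then show "x \<in> \<sigma> ` {1..n}" by (metis imageI)
    qed
  qed
  have mono: "d (\<sigma> j) \<le> d (\<sigma> i)" if "i \<in> {1..n}" "j \<in> {1..n}" "i \<le> j" for i j
  proof -
    have "(map (\<lambda>i. - d i) xs) ! (i - 1) \<le> (map (\<lambda>i. - d i) xs) ! (j - 1)"
      using srt that len by (subst (asm) sorted_iff_nth_mono) auto
    then show ?thesis using that len \<sigma>_def by auto
  qed
  show ?thesis using inj img mono unfolding bij_betw_def by blast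
qed



context cfg begin

lemma class_bounded:
  assumes c: "c > 0" and H: "\<forall>n a b. nonoverlapping n a b \<longrightarrow>
       (\<Sum>j=1..n. \<psi> \<bar>c * (f (b j) - f (a j))\<bar> / \<Lambda> j) \<le> M"
  shows "\<exists>B. \<forall>x\<in>{0..1}. \<bar>f x\<bar> \<le> B"
proof -
  have "\<bar>f x\<bar> \<le> \<bar>f 0\<bar> + orlicz_inv \<psi> (M * \<Lambda> 1) / c" if x: "x \<in> {0..1}" for x
  proof -
    have "nonoverlapping 1 (\<lambda>_. 0) (\<lambda>_. x)" unfolding nonoverlapping_def using x by auto
    then have "\<psi> \<bar>c * (f x - f 0)\<bar> / \<Lambda> 1 \<le> M" using H by fastforce
    then have "\<psi> \<bar>c * (f x - f 0)\<bar> \<le> M * \<Lambda> 1" using Lpos[of 1] by (simp add: divide_le_eq)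
    then have "\<bar>c * (f x - f 0)\<bar> \<le> orlicz_inv \<psi> (M * \<Lambda> 1)" by (intro le_inv) auto
    then have "c * \<bar>f x - f 0\<bar> \<le> orlicz_inv \<psi> (M * \<Lambda> 1)" using c by (simp add: abs_mult)
    then have "\<bar>f x - f 0\<bar> \<le> orlicz_inv \<psi> (M * \<Lambda> 1) / c" using c by (simp add: field_simps)
    then show ?thesis by linarith
  qed
  then show ?thesis by blast
qed

lemma perm_nonoverlapping:
  assumes "nonoverlapping n a b" "bij_betw \<sigma> {1..n} {1..n}"
  shows "nonoverlapping n (a \<circ> \<sigma>) (b \<circ> \<sigma>)"
proof -
  have m: "\<sigma> j \<in> {1..n}" if "j \<in> {1..n}" for j using assms(2) that bij_betwE by blast
  have i: "\<sigma> i \<noteq> \<sigma> j" if "i \<in> {1..n}" "j \<in> {1..n}" "i \<noteq> j" for i j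
    using assms(2) that unfolding bij_betw_def inj_on_def by blast
  show ?thesis unfolding nonoverlapping_def o_def
  proof (intro conjI ballI impI)
    fix j assume "j \<in> {1..n}"
    then show "0 \<le> a (\<sigma> j)" "a (\<sigma> j) \<le> b (\<sigma> j)" "b (\<sigma> j) \<le> 1"
      using m assms(1) unfolding nonoverlapping_def by blast+
  next
    fix i j assume "i \<in> {1..n}" "j \<in> {1..n}" "i \<noteq> j"
    then show "b (\<sigma> i) \<le> a (\<sigma> j) \<or> b (\<sigma> j) \<le> a (\<sigma> i)"
      using m i assms(1) unfolding nonoverlapping_def by blast
  qed
qed

lemma powr_p_inv: "0 \<le> (u::real) \<Longrightarrow> 0 < p \<Longrightarrow> (u powr p) powr (1 / p) = u"
  by (simp add: powr_powr)

lemma suff: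
  assumes p: "1 \<le> p" and \<nu>pos: "\<forall>n\<ge>1. 0 < \<nu> n" and \<nu>mono: "\<forall>n\<ge>1. \<nu> n \<le> \<nu> (Suc n)"
    and B: "\<forall>k\<ge>1. real k powr (1/p) * A k \<le> B * \<nu> k"
  shows "phi_class (\<lambda>j x. \<psi> x / \<Lambda> j) \<subseteq> Vp_nu p \<nu>"
proof
  fix f assume "f \<in> phi_class (\<lambda>j x. \<psi> x / \<Lambda> j)"
  then obtain c M where c: "c > 0" and H: "\<forall>n a b. nonoverlapping n a b \<longrightarrow>
       (\<Sum>j=1..n. \<psi> \<bar>c * (f (b j) - f (a j))\<bar> / \<Lambda> j) \<le> M"
    unfolding phi_class_def by blast
  have p0: "0 < p" using p by simp
  define B0 where "B0 = max B 0"
  define M1 where "M1 = max M 1"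
  have B0: "0 \<le> B0" unfolding B0_def by simp
  have M1: "1 \<le> M1" "M \<le> M1" unfolding M1_def by auto
  define K where "K = (M1 / c) * 2 * 3 powr (1/p) * B0"
  have var: "(\<Sum>j=1..n. \<bar>f (b j) - f (a j)\<bar> powr p) powr (1 / p) \<le> K * \<nu> n"
    if n: "n \<ge> 1" and no: "nonoverlapping n a b" for n a b
  proof -
    define d where "d j = \<bar>c * (f (b j) - f (a j))\<bar>" for j
    obtain \<sigma> where \<sigma>: "bij_betw \<sigma> {1..n} {1..n}"
      and smono: "\<forall>i\<in>{1..n}. \<forall>j\<in>{1..n}. i \<le> j \<longrightarrow> d (\<sigma> j) \<le> d (\<sigma> i)"
      using sort_perm[of n d] by blast
    have no': "nonoverlapping n (a \<circ> \<sigma>) (b \<circ> \<sigma>)" using perm_nonoverlapping[OF no \<sigma>] .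
    have S1: "(\<Sum>j=1..n. \<psi> (d (\<sigma> j)) / \<Lambda> j) \<le> M1"
      using H no' M1 unfolding d_def by fastforce
    define y where "y j = d (\<sigma> j) / M1" for j
    have y0: "\<forall>j\<in>{1..n}. 0 \<le> y j" unfolding y_def d_def using M1 by auto
    have ymono: "\<forall>i\<in>{1..n}. \<forall>j\<in>{1..n}. i \<le> j \<longrightarrow> y j \<le> y i"
      unfolding y_def using smono M1 by (auto simp: divide_right_mono)
    have "(\<Sum>j=1..n. \<psi> (y j) / \<Lambda> j) \<le> (\<Sum>j=1..n. (\<psi> (d (\<sigma> j)) / M1) / \<Lambda> j)"
    proof (rule sum_mono)
      fix j assume j: "j \<in> {1..n}"
      have h: "\<psi> (y j) \<le> \<psi> (d (\<sigma> j)) / M1" unfolding y_def using div_le M1 d_def by simp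
      show "\<psi> (y j) / \<Lambda> j \<le> (\<psi> (d (\<sigma> j)) / M1) / \<Lambda> j"
        by (rule divide_right_mono[OF h]) (use Lpos[of j] j in auto)
    qed
    also have "\<dots> = (\<Sum>j=1..n. \<psi> (d (\<sigma> j)) / \<Lambda> j) / M1"
      by (simp add: sum_divide_distrib mult.commute)
    also have "\<dots> \<le> 1" using S1 M1 by simp
    finally have cons: "(\<Sum>j=1..n. \<psi> (y j) / \<Lambda> j) \<le> 1" .
    define G where "G = (B0 * \<nu> n) powr p"
    have G0: "0 \<le> G" unfolding G_def by simp
    have Gk: "\<forall>k\<in>{1..n}. real k * A k powr p \<le> G"
    proof
      fix k assume k: "k \<in> {1..n}"
      have "real k powr (1/p) * A k \<le> B * \<nu> k" using B k by auto
      also have "\<dots> \<le> B0 * \<nu> k" using \<nu>pos k unfolding B0_def by (intro mult_right_mono) auto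
      also have "\<dots> \<le> B0 * \<nu> n" using mono_from1[OF \<nu>mono, of k n] k B0 by (intro mult_left_mono) auto
      finally have le: "real k powr (1/p) * A k \<le> B0 * \<nu> n" .
      have "(real k powr (1/p) * A k) powr p \<le> (B0 * \<nu> n) powr p"
        using le a_nonneg p0 by (intro powr_mono2) auto
      moreover have "(real k powr (1/p) * A k) powr p = real k * A k powr p"
        using a_nonneg p0 by (simp add: powr_mult powr_powr)
      ultimately show "real k * A k powr p \<le> G" unfolding G_def by simp
    qed
    have main: "(\<Sum>j=1..n. y j powr p) \<le> 2 powr p * G * 3"
      by (rule seq_bound[OF p0 y0 ymono cons Gk G0])
    have "(\<Sum>j=1..n. \<bar>f (b j) - f (a j)\<bar> powr p) = (\<Sum>j=1..n. \<bar>f (b (\<sigma> j)) - f (a (\<sigma> j))\<bar> powr p)"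
      using sum.reindex_bij_betw[OF \<sigma>, of "\<lambda>j. \<bar>f (b j) - f (a j)\<bar> powr p"] by simp
    also have "\<dots> = (\<Sum>j=1..n. (M1 / c) powr p * y j powr p)"
    proof (rule sum.cong)
      fix j assume j: "j \<in> {1..n}"
      have "\<bar>f (b (\<sigma> j)) - f (a (\<sigma> j))\<bar> = (M1 / c) * y j"
        unfolding y_def d_def using c M1 by (simp add: abs_mult)
      moreover have "((M1 / c) * y j) powr p = (M1 / c) powr p * y j powr p"
        using c M1 y0 j powr_mult[of "M1/c" "y j" p] by simp
      ultimately show "\<bar>f (b (\<sigma> j)) - f (a (\<sigma> j))\<bar> powr p = (M1 / c) powr p * y j powr p"
        by simp
    qed simp
    also have "\<dots> = (M1 / c) powr p * (\<Sum>j=1..n. y j powr p)" by (simp add: sum_distrib_left)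
    also have "\<dots> \<le> (M1 / c) powr p * (2 powr p * G * 3)"
      using main by (intro mult_left_mono) auto
    also have "\<dots> = (K * \<nu> n) powr p"
    proof -
      have nn: "0 \<le> M1 / c" "0 \<le> B0 * \<nu> n" "0 \<le> 3 powr (1/p) * (B0 * \<nu> n)"
        "0 \<le> 2 * (3 powr (1/p) * (B0 * \<nu> n))"
        using c M1 B0 \<nu>pos n by auto
      have e1: "K * \<nu> n = (M1/c) * (2 * (3 powr (1/p) * (B0 * \<nu> n)))" unfolding K_def by (simp add: mult.assoc)
      have "(K * \<nu> n) powr p = (M1/c) powr p * (2 * (3 powr (1/p) * (B0 * \<nu> n))) powr p"
        unfolding e1 by (rule powr_mult)
      also have "(2 * (3 powr (1/p) * (B0 * \<nu> n))) powr p = 2 powr p * (3 powr (1/p) * (B0 * \<nu> n)) powr p"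
        by (rule powr_mult)
      also have "(3 powr (1/p) * (B0 * \<nu> n)) powr p = (3 powr (1/p)) powr p * (B0 * \<nu> n) powr p"
        by (rule powr_mult)
      also have "(3 powr (1/p)) powr p = 3" using p0 by (simp add: powr_powr)
      finally show ?thesis unfolding G_def by (simp add: mult_ac)
    qed
    finally have le: "(\<Sum>j=1..n. \<bar>f (b j) - f (a j)\<bar> powr p) \<le> (K * \<nu> n) powr p" .
    have K0: "0 \<le> K * \<nu> n" unfolding K_def using c M1 B0 \<nu>pos n by (intro mult_nonneg_nonneg) auto
    have "(\<Sum>j=1..n. \<bar>f (b j) - f (a j)\<bar> powr p) powr (1 / p) \<le> ((K * \<nu> n) powr p) powr (1 / p)"
      using le p0 by (intro powr_mono2) (auto intro: sum_nonneg)
    also have "\<dots> = K * \<nu> n" using powr_p_inv[OF K0 p0] .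
    finally show ?thesis .
  qed
  show "f \<in> Vp_nu p \<nu>" unfolding Vp_nu_def using class_bounded[OF c H] var by blast
qed

end


definition Pt :: "nat \<Rightarrow> real" where "Pt e = 1 / (2 * real e + 2)"
definition Qt :: "nat \<Rightarrow> real" where "Qt e = 1 / (2 * real e + 3)"

lemma Pt_inj: "Pt e = Pt e' \<longleftrightarrow> e = e'"
  unfolding Pt_def by (auto simp: field_simps)

lemma Qt_not_Pt: "Qt e \<noteq> Pt e'"
proof
  assume "Qt e = Pt e'"
  then have "2 * real e + 3 = 2 * real e' + 2" unfolding Qt_def Pt_def by (auto simp: field_simps)
  then have "2 * e + 3 = 2 * e' + 2" by linarith
  then show False by presburger
qed

lemma Pt_le_Qt: "e < e' \<Longrightarrow> Pt e' \<le> Qt e"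
  unfolding Pt_def Qt_def by (intro divide_left_mono) auto

lemma Qt_le_Pt: "Qt e \<le> Pt e" "0 \<le> Qt e" "Pt e \<le> 1"
  unfolding Pt_def Qt_def by (auto intro: divide_left_mono)

definition Pinv :: "real \<Rightarrow> nat" where "Pinv t = (THE e. t = Pt e)"

lemma Pinv_Pt[simp]: "Pinv (Pt e) = e"
  unfolding Pinv_def by (rule the_equality) (auto simp: Pt_inj)

definition mkf :: "(nat \<Rightarrow> nat) \<Rightarrow> (nat \<Rightarrow> real) \<Rightarrow> real \<Rightarrow> real" where
  "mkf kk h t = (if \<exists>e. t = Pt e then
      (case prod_decode (Pinv t) of (i, l) \<Rightarrow> if l < kk i then h i else 0) else 0)"

lemma mkf_P: "l < kk i \<Longrightarrow> mkf kk h (Pt (prod_encode (i, l))) = h i"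
  unfolding mkf_def by auto

lemma mkf_Q: "mkf kk h (Qt e) = 0"
  unfolding mkf_def using Qt_not_Pt by auto

lemma mkf_nonneg: "(\<And>i. 0 \<le> h i) \<Longrightarrow> 0 \<le> mkf kk h t"
  unfolding mkf_def by (auto split: prod.split)

lemma mkf_nz: "mkf kk h t \<noteq> 0 \<Longrightarrow> \<exists>i l. l < kk i \<and> t = Pt (prod_encode (i, l)) \<and> mkf kk h t = h i
   \<and> prod_decode (Pinv t) = (i, l)"
proof -
  assume nz: "mkf kk h t \<noteq> 0"
  then obtain e where e: "t = Pt e" unfolding mkf_def by (auto split: if_splits)
  obtain i l where il: "prod_decode e = (i, l)" by (cases "prod_decode e") auto
  have ee: "e = prod_encode (i, l)" using il by (metis prod_decode_inverse)
  have "mkf kk h t = (if l < kk i then h i else 0)" unfolding mkf_def using e il by auto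
  then have "l < kk i" using nz by (auto split: if_splits)
  then show ?thesis using e ee il mkf_P[of l kk i h] by auto
qed



context cfg begin

lemma point_sum:
  assumes hyp: "\<forall>i. \<psi> (h i) * L (kk i) \<le> (1/2)^i" and h0: "\<forall>i. 0 \<le> h i"
    and J: "finite J" "J \<subseteq> {1..}" and inj: "inj_on e J"
  shows "(\<Sum>j\<in>J. \<psi> (mkf kk h (e j)) / \<Lambda> j) \<le> 2"
proof -
  define f where "f = mkf kk h"
  define J' where "J' = {j\<in>J. f (e j) \<noteq> 0}"
  define pr where "pr j = prod_decode (Pinv (e j))" for j
  define blk where "blk j = fst (pr j)" for j
  have finJ': "finite J'" using J unfolding J'_def by simp
  have J'J: "J' \<subseteq> J" unfolding J'_def by auto
  have info: "f (e j) = h (blk j) \<and> snd (pr j) < kk (blk j) \<and> e j = Pt (prod_encode (pr j))"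
    if "j \<in> J'" for j
  proof -
    have "f (e j) \<noteq> 0" using that J'_def by auto
    then obtain i l where "l < kk i" "e j = Pt (prod_encode (i, l))" "f (e j) = h i"
      "prod_decode (Pinv (e j)) = (i, l)"
      using mkf_nz[of kk h "e j"] unfolding f_def by blast
    then show ?thesis unfolding blk_def pr_def by auto
  qed
  have "(\<Sum>j\<in>J. \<psi> (f (e j)) / \<Lambda> j) = (\<Sum>j\<in>J'. \<psi> (f (e j)) / \<Lambda> j)"
    by (rule sum.mono_neutral_right[OF J(1) J'J]) (auto simp: J'_def psi0)
  also have "\<dots> = (\<Sum>j\<in>J'. \<psi> (h (blk j)) / \<Lambda> j)"
  proof (rule sum.cong)
    fix j assume "j \<in> J'" then have "f (e j) = h (blk j)" using info by blast
    then show "\<psi> (f (e j)) / \<Lambda> j = \<psi> (h (blk j)) / \<Lambda> j" by simp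
  qed simp
  also have "\<dots> = (\<Sum>i\<in>blk ` J'. (\<Sum>j\<in>{x\<in>J'. blk x = i}. \<psi> (h (blk j)) / \<Lambda> j))"
    by (rule sum.group[symmetric]) (use finJ' in auto)
  also have "\<dots> \<le> (\<Sum>i\<in>blk ` J'. (1/2::real)^i)"
  proof (rule sum_mono)
    fix i assume "i \<in> blk ` J'"
    define Ji where "Ji = {x\<in>J'. blk x = i}"
    have finJi: "finite Ji" using finJ' Ji_def by simp
    have "(\<Sum>j\<in>Ji. \<psi> (h (blk j)) / \<Lambda> j) = \<psi> (h i) * (\<Sum>j\<in>Ji. 1 / \<Lambda> j)"
      unfolding Ji_def by (simp add: sum_distrib_left)
    also have "(\<Sum>j\<in>Ji. 1 / \<Lambda> j) \<le> L (kk i)"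
    proof (rule sum_card_le[OF finJi])
      show "Ji \<subseteq> {1..}" using J J'J Ji_def by auto
      have injs: "inj_on (\<lambda>j. snd (pr j)) Ji"
      proof
        fix x y assume x: "x \<in> Ji" and y: "y \<in> Ji" and s: "snd (pr x) = snd (pr y)"
        have "fst (pr x) = fst (pr y)" using x y Ji_def blk_def by auto
        then have "pr x = pr y" using s by (simp add: prod_eq_iff)
        then have "e x = e y" using info x y Ji_def by (metis (mono_tags, lifting) mem_Collect_eq)
        then show "x = y" using inj x y J'J Ji_def inj_on_def by (metis (mono_tags, lifting) mem_Collect_eq subsetD)
      qed
      have "(\<lambda>j. snd (pr j)) ` Ji \<subseteq> {..<kk i}" using info Ji_def by auto
      then have "card Ji \<le> card {..<kk i}" using card_inj_on_le[OF injs] by blast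
      then show "card Ji \<le> kk i" by simp
    qed
    then have "\<psi> (h i) * (\<Sum>j\<in>Ji. 1 / \<Lambda> j) \<le> \<psi> (h i) * L (kk i)"
      using nonneg h0 by (intro mult_left_mono) auto
    also have "\<dots> \<le> (1/2)^i" using hyp by simp
    finally show "(\<Sum>j\<in>{x\<in>J'. blk x = i}. \<psi> (h (blk j)) / \<Lambda> j) \<le> (1/2)^i"
      unfolding Ji_def by simp
  qed
  also have "\<dots> \<le> (\<Sum>i. (1/2::real)^i)"
    by (rule sum_le_suminf) (use finJ' in auto)
  also have "\<dots> = 2" using suminf_geometric[of "1/2::real"] by simp
  finally show ?thesis unfolding f_def .
qed

end


context cfg begin

lemma mkf_in_class:
  assumes hyp: "\<forall>i. \<psi> (h i) * L (kk i) \<le> (1/2)^i" and h0: "\<forall>i. 0 \<le> h i"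
  shows "mkf kk h \<in> phi_class (\<lambda>j x. \<psi> x / \<Lambda> j)"
proof -
  define f where "f = mkf kk h"
  have f0: "0 \<le> f t" for t unfolding f_def using mkf_nonneg h0 by blast
  have "(\<Sum>j=1..n. \<psi> \<bar>(1/2) * (f (b j) - f (a j))\<bar> / \<Lambda> j) \<le> 2"
    if no: "nonoverlapping n a b" for n a b
  proof -
    define J where "J = {j\<in>{1..n}. a j < b j}"
    have ab: "a j \<le> b j" if "j \<in> {1..n}" for j using no that unfolding nonoverlapping_def by blast
    have finJ: "finite J" "J \<subseteq> {1..}" "J \<subseteq> {1..n}" unfolding J_def by auto
    have injA: "inj_on a J"
    proof
      fix i j assume i: "i \<in> J" and j: "j \<in> J" and e: "a i = a j"
      show "i = j"
      proof (rule ccontr)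
        assume "i \<noteq> j"
        then have "b i \<le> a j \<or> b j \<le> a i" using no i j unfolding nonoverlapping_def J_def by blast
        then show False using i j e unfolding J_def by auto
      qed
    qed
    have injB: "inj_on b J"
    proof
      fix i j assume i: "i \<in> J" and j: "j \<in> J" and e: "b i = b j"
      show "i = j"
      proof (rule ccontr)
        assume "i \<noteq> j"
        then have "b i \<le> a j \<or> b j \<le> a i" using no i j unfolding nonoverlapping_def J_def by blast
        then show False using i j e unfolding J_def by auto
      qed
    qed
    have "(\<Sum>j=1..n. \<psi> \<bar>(1/2) * (f (b j) - f (a j))\<bar> / \<Lambda> j)
        = (\<Sum>j\<in>J. \<psi> \<bar>(1/2) * (f (b j) - f (a j))\<bar> / \<Lambda> j)"
    proof (rule sum.mono_neutral_right)
      show "\<forall>j\<in>{1..n} - J. \<psi> \<bar>(1/2) * (f (b j) - f (a j))\<bar> / \<Lambda> j = 0"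
      proof
        fix j assume j: "j \<in> {1..n} - J"
        then have "a j = b j" using ab unfolding J_def by force
        then show "\<psi> \<bar>(1/2) * (f (b j) - f (a j))\<bar> / \<Lambda> j = 0" using psi0 by simp
      qed
    qed (use finJ in auto)
    also have "\<dots> \<le> (\<Sum>j\<in>J. (\<psi> (f (a j)) / \<Lambda> j + \<psi> (f (b j)) / \<Lambda> j) / 2)"
    proof (rule sum_mono)
      fix j assume j: "j \<in> J"
      have "\<bar>(1/2) * (f (b j) - f (a j))\<bar> \<le> (f (a j) + f (b j)) / 2"
        using f0[of "a j"] f0[of "b j"] by (simp add: abs_mult abs_le_iff)
      then have "\<psi> \<bar>(1/2) * (f (b j) - f (a j))\<bar> \<le> \<psi> ((f (a j) + f (b j)) / 2)"
        by (intro mono) auto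
      also have "\<dots> \<le> (\<psi> (f (a j)) + \<psi> (f (b j))) / 2" using midpoint f0 by blast
      finally have le: "\<psi> \<bar>(1/2) * (f (b j) - f (a j))\<bar> \<le> (\<psi> (f (a j)) + \<psi> (f (b j))) / 2" .
      have lp: "0 < \<Lambda> j" using Lpos j finJ by auto
      have "\<psi> \<bar>(1/2) * (f (b j) - f (a j))\<bar> / \<Lambda> j \<le> ((\<psi> (f (a j)) + \<psi> (f (b j))) / 2) / \<Lambda> j"
        by (rule divide_right_mono[OF le]) (use lp in simp)
      then show "\<psi> \<bar>(1/2) * (f (b j) - f (a j))\<bar> / \<Lambda> j \<le> (\<psi> (f (a j)) / \<Lambda> j + \<psi> (f (b j)) / \<Lambda> j) / 2"
        by (simp add: add_divide_distrib)
    qed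
    also have "\<dots> = ((\<Sum>j\<in>J. \<psi> (f (a j)) / \<Lambda> j) + (\<Sum>j\<in>J. \<psi> (f (b j)) / \<Lambda> j)) / 2"
      by (simp only: sum_divide_distrib[symmetric] sum.distrib)
    also have "\<dots> \<le> (2 + 2) / 2"
      using point_sum[OF hyp h0 finJ(1,2) injA] point_sum[OF hyp h0 finJ(1,2) injB]
      unfolding f_def by simp
    finally show ?thesis by simp
  qed
  then show ?thesis unfolding phi_class_def f_def
    by (intro CollectI exI[of _ "1/2"] conjI exI[of _ 2]) auto
qed

lemma nec:
  assumes p: "1 \<le> p" and \<nu>pos: "\<forall>n\<ge>1. 0 < \<nu> n"
    and incl: "phi_class (\<lambda>j x. \<psi> x / \<Lambda> j) \<subseteq> Vp_nu p \<nu>"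
  shows "\<exists>B. \<forall>k\<ge>1. real k powr (1/p) * A k \<le> B * \<nu> k"
proof (rule ccontr)
  assume nb: "\<not> ?thesis"
  have p0: "0 < p" using p by simp
  define g where "g k = real k powr (1/p) * A k" for k
  have ex: "\<exists>k. k \<ge> 1 \<and> g k > 4^i * \<nu> k" for i :: nat
    using nb unfolding g_def by (meson not_le)
  define kk where "kk i = (SOME k. k \<ge> 1 \<and> g k > 4^i * \<nu> k)" for i
  have kk: "kk i \<ge> 1" "g (kk i) > 4^i * \<nu> (kk i)" for i
    using someI_ex[OF ex[of i]] unfolding kk_def by auto
  define h where "h i = (1/2)^i * A (kk i)" for i
  have h0: "\<forall>i. 0 \<le> h i" unfolding h_def using a_nonneg by simp
  have hyp: "\<forall>i. \<psi> (h i) * L (kk i) \<le> (1/2)^i"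
  proof
    fix i
    have "\<psi> (h i) \<le> (1/2)^i * \<psi> (A (kk i))" unfolding h_def
      by (rule scale_le) (auto simp: a_nonneg power_le_one)
    also have "\<dots> = (1/2)^i / L (kk i)" using psi_a kk(1)[of i] by simp
    finally show "\<psi> (h i) * L (kk i) \<le> (1/2)^i" using L_pos[OF kk(1)[of i]] by (simp add: field_simps)
  qed
  define f where "f = mkf kk h"
  have "f \<in> Vp_nu p \<nu>" using incl mkf_in_class[OF hyp h0] unfolding f_def by blast
  then obtain Mv where Mv: "\<forall>n\<ge>1. \<forall>a b. nonoverlapping n a b \<longrightarrow>
          (\<Sum>j=1..n. \<bar>f (b j) - f (a j)\<bar> powr p) powr (1 / p) \<le> Mv * \<nu> n"
    unfolding Vp_nu_def by blast
  define i where "i = nat \<lceil>max Mv 0\<rceil>"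
  have "Mv \<le> real i" unfolding i_def by linarith
  also have "real i < 2^i"
  proof -
    have "i < 2^i" by (rule less_exp)
    then have "real i < real (2^i)" by (simp only: of_nat_less_iff)
    then show ?thesis by simp
  qed
  finally have Mvi: "Mv < 2^i" .
  define n where "n = kk i"
  define ee where "ee j = prod_encode (i, j - 1)" for j
  define aa where "aa j = Qt (ee j)" for j
  define bb where "bb j = Pt (ee j)" for j
  have no: "nonoverlapping n aa bb"
    unfolding nonoverlapping_def
  proof (intro conjI ballI impI)
    fix j assume "j \<in> {1..n}"
    show "0 \<le> aa j" "aa j \<le> bb j" "bb j \<le> 1" unfolding aa_def bb_def using Qt_le_Pt by auto
  next
    fix j j' assume j: "j \<in> {1..n}" and j': "j' \<in> {1..n}" and ne: "j \<noteq> j'"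
    have "ee j \<noteq> ee j'" unfolding ee_def using j j' ne by auto
    then have "ee j < ee j' \<or> ee j' < ee j" by linarith
    then show "bb j \<le> aa j' \<or> bb j' \<le> aa j" unfolding aa_def bb_def using Pt_le_Qt by blast
  qed
  have n1: "n \<ge> 1" unfolding n_def using kk by simp
  have "(\<Sum>j=1..n. \<bar>f (bb j) - f (aa j)\<bar> powr p) = (\<Sum>j=1..n. h i powr p)"
  proof (rule sum.cong)
    fix j assume j: "j \<in> {1..n}"
    have "f (bb j) = h i" unfolding f_def bb_def ee_def using j n_def by (intro mkf_P) auto
    moreover have "f (aa j) = 0" unfolding f_def aa_def using mkf_Q by simp
    ultimately show "\<bar>f (bb j) - f (aa j)\<bar> powr p = h i powr p" using h0 by simp
  qed simp
  also have "\<dots> = real n * h i powr p" by simp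
  finally have s: "(\<Sum>j=1..n. \<bar>f (bb j) - f (aa j)\<bar> powr p) = real n * h i powr p" .
  have "(real n * h i powr p) powr (1/p) = real n powr (1/p) * (h i powr p) powr (1/p)"
    by (rule powr_mult)
  also have "(h i powr p) powr (1/p) = h i" using h0 p0 powr_p_inv by blast
  finally have eq: "(\<Sum>j=1..n. \<bar>f (bb j) - f (aa j)\<bar> powr p) powr (1/p) = (1/2)^i * g n"
    using s unfolding h_def g_def n_def by (simp add: mult_ac)
  have "Mv * \<nu> n < 2^i * \<nu> n" using Mvi \<nu>pos n1 by simp
  also have "(2::real)^i * \<nu> n = (1/2)^i * (4^i * \<nu> n)"
  proof -
    have "(1/2::real)^i * 4^i = 2^i" by (simp add: power_mult_distrib[symmetric])
    then show ?thesis by (simp add: mult.assoc[symmetric])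
  qed
  also have "\<dots> < (1/2)^i * g n"
    using kk(2)[of i] unfolding n_def by simp
  finally have "Mv * \<nu> n < (\<Sum>j=1..n. \<bar>f (bb j) - f (aa j)\<bar> powr p) powr (1/p)" using eq by simp
  moreover have "(\<Sum>j=1..n. \<bar>f (bb j) - f (aa j)\<bar> powr p) powr (1/p) \<le> Mv * \<nu> n"
    using Mv n1 no by blast
  ultimately show False by simp
qed

end


context cfg begin
lemma core:
  assumes p: "1 \<le> p" and \<nu>pos: "\<forall>n\<ge>1. 0 < \<nu> n" and \<nu>mono: "\<forall>n\<ge>1. \<nu> n \<le> \<nu> (Suc n)"
  shows "phi_class (\<lambda>j x. \<psi> x / \<Lambda> j) \<subseteq> Vp_nu p \<nu> \<longleftrightarrow>
     (\<exists>B. \<forall>k\<ge>1. real k powr (1/p) * orlicz_inv \<psi> (1 / (\<Sum>j=1..k. 1 / \<Lambda> j)) \<le> B * \<nu> k)"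
  using suff[OF p \<nu>pos \<nu>mono] nec[OF p \<nu>pos] unfolding A_def L_def by blast
end

lemma limsup_iff:
  fixes g \<nu> :: "nat \<Rightarrow> real"
  assumes \<nu>pos: "\<forall>n\<ge>1. 0 < \<nu> n" and \<nu>mono: "\<forall>n\<ge>1. \<nu> n \<le> \<nu> (Suc n)"
  shows "limsup (\<lambda>n. ereal (1 / \<nu> n * Max (g ` {1..n}))) < \<infinity> \<longleftrightarrow> (\<exists>B. \<forall>k\<ge>1. g k \<le> B * \<nu> k)"
proof
  assume "limsup (\<lambda>n. ereal (1 / \<nu> n * Max (g ` {1..n}))) < \<infinity>"
  then obtain C where C: "\<forall>n. 1 / \<nu> n * Max (g ` {1..n}) \<le> C"
    using limsup_finite_then_bounded[of "\<lambda>n. 1 / \<nu> n * Max (g ` {1..n})"] by blast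
  have "g k \<le> C * \<nu> k" if k: "k \<ge> 1" for k
  proof -
    have "g k \<le> Max (g ` {1..k})" using k by (intro Max_ge) auto
    moreover have "Max (g ` {1..k}) \<le> C * \<nu> k" using C[rule_format, of k] \<nu>pos k
      by (simp add: field_simps)
    ultimately show ?thesis by linarith
  qed
  then show "\<exists>B. \<forall>k\<ge>1. g k \<le> B * \<nu> k" by blast
next
  assume "\<exists>B. \<forall>k\<ge>1. g k \<le> B * \<nu> k"
  then obtain B where B: "\<forall>k\<ge>1. g k \<le> B * \<nu> k" by blast
  define B0 where "B0 = max B 0"
  have le: "1 / \<nu> n * Max (g ` {1..n}) \<le> B0" if n: "n \<ge> 1" for n
  proof -
    have "Max (g ` {1..n}) \<le> B0 * \<nu> n"
    proof (subst Max_le_iff)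
      show "\<forall>a\<in>g ` {1..n}. a \<le> B0 * \<nu> n"
      proof
        fix x assume "x \<in> g ` {1..n}"
        then obtain k where k: "k \<in> {1..n}" "x = g k" by blast
        have "g k \<le> B * \<nu> k" using B k by auto
        also have "\<dots> \<le> B0 * \<nu> k" unfolding B0_def using \<nu>pos k by (intro mult_right_mono) auto
        also have "\<dots> \<le> B0 * \<nu> n" unfolding B0_def
          using mono_from1[OF \<nu>mono, of k n] k by (intro mult_left_mono) auto
        finally show "x \<le> B0 * \<nu> n" using k by simp
      qed
    qed (use n in auto)
    then show ?thesis using \<nu>pos n by (simp add: field_simps)
  qed
  have "limsup (\<lambda>n. ereal (1 / \<nu> n * Max (g ` {1..n}))) \<le> ereal B0"
    by (rule Limsup_bounded) (use le in \<open>auto simp: eventually_sequentially\<close>)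
  then show "limsup (\<lambda>n. ereal (1 / \<nu> n * Max (g ` {1..n}))) < \<infinity>"
    using order.strict_trans1 by fastforce
qed

lemma orlicz_psi:
  assumes "orlicz_function \<phi>"
  shows "psi_fun \<phi>"
proof -
  have cont: "continuous_on {0..} \<phi>" and cvx: "convex_on {0..} \<phi>" and pos: "\<forall>x>0. \<phi> x > 0"
    and lim0: "((\<lambda>x. \<phi> x / x) \<longlongrightarrow> 0) (at_right 0)"
    and liminf: "filterlim (\<lambda>x. \<phi> x / x) at_top at_top"
    using assms unfolding orlicz_function_def by auto
  have t1: "(\<phi> \<longlongrightarrow> \<phi> 0) (at_right 0)"
  proof -
    have "(\<phi> \<longlongrightarrow> \<phi> 0) (at 0 within {0..})"
      using cont unfolding continuous_on_def by auto
    then show ?thesis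
      by (rule tendsto_within_subset) auto
  qed
  have t2: "(\<phi> \<longlongrightarrow> 0) (at_right 0)"
  proof -
    have "((\<lambda>x. \<phi> x / x * x) \<longlongrightarrow> 0 * 0) (at_right 0)"
      by (intro tendsto_mult lim0) (auto intro: tendsto_ident_at)
    moreover have "eventually (\<lambda>x. \<phi> x / x * x = \<phi> x) (at_right (0::real))"
      by (auto simp: eventually_at_right_field intro!: exI[of _ 1])
    ultimately show ?thesis by (simp add: tendsto_cong)
  qed
  have phi0: "\<phi> 0 = 0" using tendsto_unique[OF _ t1 t2] by simp
  show ?thesis
  proof
    show "\<phi> 0 = 0" by (rule phi0)
    show "convex_on {0..} \<phi>" by (rule cvx)
    show "\<And>x. x > 0 \<Longrightarrow> \<phi> x > 0" using pos by auto
    fix y :: real assume y: "y \<ge> 0"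
    have "eventually (\<lambda>x. \<phi> x / x \<ge> 1) at_top"
      using liminf by (simp add: filterlim_at_top)
    then obtain N where N: "\<And>x. x \<ge> N \<Longrightarrow> \<phi> x / x \<ge> 1" by (auto simp: eventually_at_top_linorder)
    define X where "X = max N (max y 1)"
    have X: "X \<ge> N" "X \<ge> y" "X \<ge> 1" unfolding X_def by auto
    have "\<phi> X \<ge> X" using N[OF X(1)] X(3) by (simp add: field_simps)
    then have yX: "y \<le> \<phi> X" using X by linarith
    have "continuous_on {0..X} \<phi>" using cont by (rule continuous_on_subset) auto
    then obtain x where "0 \<le> x" "x \<le> X" "\<phi> x = y"
      using IVT'[of \<phi> 0 y X] phi0 y yX X by auto
    then show "\<exists>x\<ge>0. \<phi> x = y" by blast
  qed
qed

lemma powr_psi: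
  assumes q: "1 \<le> q"
  shows "psi_fun (\<lambda>x. x powr q)"
proof
  show "0 powr q = (0::real)" by simp
  show "\<And>x. 0 < x \<Longrightarrow> 0 < x powr q" by simp
  show "\<exists>x\<ge>0. x powr q = y" if "y \<ge> 0" for y
    using that q by (intro exI[of _ "y powr (1/q)"]) (auto simp: powr_powr)
  show "convex_on {0..} (\<lambda>x::real. x powr q)"
  proof (rule convex_onI)
    show "convex {0::real..}" by (simp add: convex_real_interval)
    fix t x y :: real assume t: "0 < t" "t < 1" and x: "x \<in> {0..}" and y: "y \<in> {0..}"
    show "((1 - t) *\<^sub>R x + t *\<^sub>R y) powr q \<le> (1 - t) * x powr q + t * y powr q"
    proof (cases "x = 0 \<or> y = 0")
      case False
      then have "x \<in> {0<..}" "y \<in> {0<..}" using x y by auto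
      then show ?thesis using convex_onD[OF powr_convex[OF q], of t x y] t by auto
    next
      case True
      have tq: "t powr q \<le> t" "(1 - t) powr q \<le> 1 - t"
        using t q powr_mono' [of 1 q] by (auto intro: powr_le_one_le)
      show ?thesis
      proof (cases "x = 0")
        case True
        have "((1 - t) *\<^sub>R x + t *\<^sub>R y) powr q = t powr q * y powr q" using True by (simp add: powr_mult)
        also have "\<dots> \<le> t * y powr q" using tq by (intro mult_right_mono) auto
        finally show ?thesis using True by simp
      next
        case False
        then have y0: "y = 0" using \<open>x = 0 \<or> y = 0\<close> by simp
        have "((1 - t) *\<^sub>R x + t *\<^sub>R y) powr q = (1 - t) powr q * x powr q" using y0 by (simp add: powr_mult)
        also have "\<dots> \<le> (1 - t) * x powr q" using tq by (intro mult_right_mono) auto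
        finally show ?thesis using y0 by simp
      qed
    qed
  qed
qed

lemma orlicz_inv_powr:
  assumes q: "1 \<le> q" and y: "0 \<le> y"
  shows "orlicz_inv (\<lambda>x. x powr q) y = y powr (1/q)"
  unfolding orlicz_inv_def
proof (rule the_equality)
  show "0 \<le> y powr (1/q) \<and> (y powr (1/q)) powr q = y" using q y by (simp add: powr_powr)
  fix x assume "0 \<le> x \<and> x powr q = y"
  then show "x = y powr (1/q)" using q by (auto simp: powr_powr)
qed



lemma cond_cong:
  assumes "\<And>k. k \<ge> 1 \<Longrightarrow> g1 k = g2 k"
  shows "(\<exists>B. \<forall>k\<ge>1. g1 k \<le> B * (\<nu>::nat\<Rightarrow>real) k) \<longleftrightarrow> (\<exists>B. \<forall>k\<ge>1. g2 k \<le> B * \<nu> k)"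
  using assms by auto

theorem corollary6p3:
  fixes p q :: real and \<nu> \<Lambda> :: "nat \<Rightarrow> real" and \<phi> :: "real \<Rightarrow> real"
  assumes "1 \<le> p" and "1 \<le> q"
    and "modulus_of_variation \<nu>" and "orlicz_function \<phi>" and "Lambda_sequence \<Lambda>"
  shows
   "(BV_q q \<subseteq> Vp_nu p \<nu> \<longleftrightarrow>
       limsup (\<lambda>n. ereal (1 / \<nu> n * Max ((\<lambda>k. real k powr (1/p - 1/q)) ` {1..n}))) < \<infinity>)
  \<and> (V_phi \<phi> \<subseteq> Vp_nu p \<nu> \<longleftrightarrow>
       limsup (\<lambda>n. ereal (1 / \<nu> n * Max ((\<lambda>k. real k powr (1/p) * orlicz_inv \<phi> (1 / real k)) ` {1..n}))) < \<infinity>)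
  \<and> (LambdaBV \<Lambda> \<subseteq> Vp_nu p \<nu> \<longleftrightarrow>
       limsup (\<lambda>n. ereal (1 / \<nu> n * Max ((\<lambda>k. real k powr (1/p) / (\<Sum>j=1..k. 1 / \<Lambda> j)) ` {1..n}))) < \<infinity>)
  \<and> (LambdaBV_q \<Lambda> q \<subseteq> Vp_nu p \<nu> \<longleftrightarrow>
       limsup (\<lambda>n. ereal (1 / \<nu> n * Max ((\<lambda>k. real k powr (1/p) * (\<Sum>j=1..k. 1 / \<Lambda> j) powr (- 1/q)) ` {1..n}))) < \<infinity>)
  \<and> (phiLambdaBV \<phi> \<Lambda> \<subseteq> Vp_nu p \<nu> \<longleftrightarrow>
       limsup (\<lambda>n. ereal (1 / \<nu> n * Max ((\<lambda>k. real k powr (1/p) * orlicz_inv \<phi> (1 / (\<Sum>j=1..k. 1 / \<Lambda> j))) ` {1..n}))) < \<infinity>)"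
proof -
  note p = assms(1) and q = assms(2)
  have \<nu>pos: "\<forall>n\<ge>1. 0 < \<nu> n" and \<nu>mono: "\<forall>n\<ge>1. \<nu> n \<le> \<nu> (Suc n)"
    using assms(3) unfolding modulus_of_variation_def by auto
  have \<Lambda>pos: "\<And>j. j \<ge> 1 \<Longrightarrow> 0 < \<Lambda> j" and \<Lambda>mono: "\<forall>j\<ge>1. \<Lambda> j \<le> \<Lambda> (Suc j)"
    using assms(5) unfolding Lambda_sequence_def by auto
  have Lpos: "0 < (\<Sum>j=1..k. 1 / \<Lambda> j)" if "k \<ge> 1" for k
    by (rule sum_pos) (use that \<Lambda>pos in auto)
  have one: "\<And>j. j \<ge> 1 \<Longrightarrow> 0 < (1::real)" "\<forall>j\<ge>1. (1::real) \<le> 1" by auto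
  interpret Pq: psi_fun "\<lambda>x. x powr q" by (rule powr_psi[OF q])
  interpret P1: psi_fun "\<lambda>x. x powr 1" by (rule powr_psi) simp
  interpret Ph: psi_fun \<phi> by (rule orlicz_psi[OF assms(4)])
  interpret C1: cfg "\<lambda>x. x powr q" "\<lambda>_. 1" by unfold_locales auto
  interpret C2: cfg \<phi> "\<lambda>_. 1" by unfold_locales auto
  interpret C3: cfg "\<lambda>x. x powr 1" \<Lambda> by unfold_locales (use \<Lambda>pos \<Lambda>mono in auto)
  interpret C4: cfg "\<lambda>x. x powr q" \<Lambda> by unfold_locales (use \<Lambda>pos \<Lambda>mono in auto)
  interpret C5: cfg \<phi> \<Lambda> by unfold_locales (use \<Lambda>pos \<Lambda>mono in auto)
  note LI = limsup_iff[OF \<nu>pos \<nu>mono]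
  have i: "BV_q q \<subseteq> Vp_nu p \<nu> \<longleftrightarrow>
       limsup (\<lambda>n. ereal (1 / \<nu> n * Max ((\<lambda>k. real k powr (1/p - 1/q)) ` {1..n}))) < \<infinity>"
  proof -
    have e: "BV_q q = phi_class (\<lambda>j x. x powr q / 1)" unfolding BV_q_def by simp
    have g: "real k powr (1/p) * orlicz_inv (\<lambda>x. x powr q) (1 / (\<Sum>j=1..k. 1 / 1)) = real k powr (1/p - 1/q)"
      if "k \<ge> 1" for k
    proof -
      have "orlicz_inv (\<lambda>x. x powr q) (1 / (\<Sum>j=1..k. 1 / 1)) = (1 / real k) powr (1/q)"
        using orlicz_inv_powr[OF q, of "1 / real k"] by simp
      also have "\<dots> = 1 / real k powr (1/q)" by (simp add: powr_divide)
      finally show ?thesis using that by (simp add: powr_diff)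
    qed
    show ?thesis unfolding e C1.core[OF p \<nu>pos \<nu>mono] LI by (rule cond_cong) (rule g)
  qed
  have ii: "V_phi \<phi> \<subseteq> Vp_nu p \<nu> \<longleftrightarrow>
       limsup (\<lambda>n. ereal (1 / \<nu> n * Max ((\<lambda>k. real k powr (1/p) * orlicz_inv \<phi> (1 / real k)) ` {1..n}))) < \<infinity>"
  proof -
    have e: "V_phi \<phi> = phi_class (\<lambda>j x. \<phi> x / 1)" unfolding V_phi_def by simp
    show ?thesis unfolding e C2.core[OF p \<nu>pos \<nu>mono] LI by (rule cond_cong) simp
  qed
  have iii: "LambdaBV \<Lambda> \<subseteq> Vp_nu p \<nu> \<longleftrightarrow>
       limsup (\<lambda>n. ereal (1 / \<nu> n * Max ((\<lambda>k. real k powr (1/p) / (\<Sum>j=1..k. 1 / \<Lambda> j)) ` {1..n}))) < \<infinity>"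
  proof -
    have e: "LambdaBV \<Lambda> = phi_class (\<lambda>j x. x powr 1 / \<Lambda> j)" unfolding LambdaBV_def LambdaBV_q_def by simp
    have g: "real k powr (1/p) * orlicz_inv (\<lambda>x. x powr 1) (1 / (\<Sum>j=1..k. 1 / \<Lambda> j))
        = real k powr (1/p) / (\<Sum>j=1..k. 1 / \<Lambda> j)" if "k \<ge> 1" for k
    proof -
      have "orlicz_inv (\<lambda>x. x powr 1) (1 / (\<Sum>j=1..k. 1 / \<Lambda> j)) = (1 / (\<Sum>j=1..k. 1 / \<Lambda> j)) powr (1/1)"
        using orlicz_inv_powr[of 1 "1 / (\<Sum>j=1..k. 1 / \<Lambda> j)"] Lpos[OF that] by simp
      also have "\<dots> = 1 / (\<Sum>j=1..k. 1 / \<Lambda> j)" using Lpos[OF that] by simp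
      finally show ?thesis by simp
    qed
    show ?thesis unfolding e C3.core[OF p \<nu>pos \<nu>mono] LI by (rule cond_cong) (rule g)
  qed
  have iv: "LambdaBV_q \<Lambda> q \<subseteq> Vp_nu p \<nu> \<longleftrightarrow>
       limsup (\<lambda>n. ereal (1 / \<nu> n * Max ((\<lambda>k. real k powr (1/p) * (\<Sum>j=1..k. 1 / \<Lambda> j) powr (- 1/q)) ` {1..n}))) < \<infinity>"
  proof -
    have e: "LambdaBV_q \<Lambda> q = phi_class (\<lambda>j x. x powr q / \<Lambda> j)" unfolding LambdaBV_q_def by simp
    have g: "real k powr (1/p) * orlicz_inv (\<lambda>x. x powr q) (1 / (\<Sum>j=1..k. 1 / \<Lambda> j))
        = real k powr (1/p) * (\<Sum>j=1..k. 1 / \<Lambda> j) powr (- 1/q)" if "k \<ge> 1" for k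
    proof -
      have "orlicz_inv (\<lambda>x. x powr q) (1 / (\<Sum>j=1..k. 1 / \<Lambda> j)) = (1 / (\<Sum>j=1..k. 1 / \<Lambda> j)) powr (1/q)"
        using orlicz_inv_powr[OF q, of "1 / (\<Sum>j=1..k. 1 / \<Lambda> j)"] Lpos[OF that] by simp
      also have "\<dots> = (\<Sum>j=1..k. 1 / \<Lambda> j) powr (- 1/q)"
        using Lpos[OF that] by (simp add: powr_divide powr_minus_divide)
      finally show ?thesis by simp
    qed
    show ?thesis unfolding e C4.core[OF p \<nu>pos \<nu>mono] LI by (rule cond_cong) (rule g)
  qed
  have v: "phiLambdaBV \<phi> \<Lambda> \<subseteq> Vp_nu p \<nu> \<longleftrightarrow>
       limsup (\<lambda>n. ereal (1 / \<nu> n * Max ((\<lambda>k. real k powr (1/p) * orlicz_inv \<phi> (1 / (\<Sum>j=1..k. 1 / \<Lambda> j))) ` {1..n}))) < \<infinity>"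
    unfolding phiLambdaBV_def C5.core[OF p \<nu>pos \<nu>mono] LI by simp
  show ?thesis using i ii iii iv v by blast
qed


end
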